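(* Let $\alpha\in\mathbb{R}$, $\gamma>0$, and let $\mu$ be a positive Borel measure on $[0,1)$ with moments $\mu_n=\int_{[0,1)}t^n\,d\mu(t)$. Suppose there is $\varepsilon>0$ such that $\mu_n=\mathcal{O}\big(n^{-(\frac{\alpha}{2}+\varepsilon)}\big)$ as $n\to\infty$. Then the generalized Hilbert operator $\mathcal{H}_{\mu,\gamma}$ is well defined on $\mathcal{D}_\alpha$, i.e. for every $f(z)=\sum_{k=0}^\infty a_kz^k\in\mathcal{D}_\alpha$ and every $n\ge 0$ the series $\sum_{k=0}^{\infty}\mu_{n+k}a_k$ converges.
   Context: $\mathbb{D}$ is the open unit disc. For $\alpha\in\mathbb{R}$, the Dirichlet-type space $\mathcal{D}_\alpha$ consists of analytic $f(z)=\sum_{n\ge0}a_nz^n$ on $\mathbb{D}$ with $\|f\|_{\mathcal{D}_\alpha}^2=\sum_{n=0}^\infty (n+1)^{1-\alpha}|a_n|^2<\infty$. For a positive Borel measure $\mu$ on $[0,1)$ and $\gamma>0$, the generalized Hilbert operator is defined on analytic $f(z)=\sum_k a_kz^k$ by $\mathcal{H}_{\mu,\gamma}(f)(z)=\sum_{n=0}^\infty\Big(\sum_{k=0}^\infty \mu_{n+k}a_k\Big)\frac{\Gamma(n+\gamma)}{n!\,\Gamma(\gamma)}z^n$, where $\mu_j=\int_{[0,1)}t^j\,d\mu(t)$. *)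

theory Defs
  imports "HOL-Analysis.Analysis" "HOL-Library.Landau_Symbols"
begin

definition moment :: "real measure \<Rightarrow> nat \<Rightarrow> real" where
  "moment M n = (\<integral>t. t ^ n \<partial>M)"

definition borel_measure_on_01 :: "real measure \<Rightarrow> bool" where
  "borel_measure_on_01 M \<longleftrightarrow> space M = {0..<1} \<and> sets M = sets (restrict_space borel {0..<1})"

text \<open>Dirichlet-type space D_alpha, described via Taylor coefficients a of f.\<close>
definition in_Dirichlet_type :: "real \<Rightarrow> (nat \<Rightarrow> complex) \<Rightarrow> bool" where
  "in_Dirichlet_type \<alpha> a \<longleftrightarrow> summable (\<lambda>n. (real n + 1) powr (1 - \<alpha>) * (norm (a n))\<^sup>2)"

end

theory Submission
  imports Defs
begin

lemma shift_bound:
  fixes p :: real and n k :: nat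
  assumes "k \<ge> 1"
  shows "real (n + k) powr p \<le> 2 powr \<bar>p\<bar> * real (n + 1) powr \<bar>p\<bar> * real (k + 1) powr p"
proof -
  have A: "1 \<le> real (n + 1) powr \<bar>p\<bar>" by (intro ge_one_powr_ge_zero) auto
  have B: "1 \<le> (2::real) powr \<bar>p\<bar>" by (intro ge_one_powr_ge_zero) auto
  have C: "0 \<le> real (k + 1) powr p" by simp
  show ?thesis
  proof (cases "p \<ge> 0")
    case True
    have "real (n + k) powr p \<le> (real (n+1) * real (k+1)) powr p"
      using True assms by (intro powr_mono2) (auto simp: algebra_simps)
    also have "\<dots> = real (n+1) powr \<bar>p\<bar> * real (k+1) powr p" using True by (simp add: powr_mult)
    also have "\<dots> \<le> 2 powr \<bar>p\<bar> * (real (n+1) powr \<bar>p\<bar> * real (k+1) powr p)"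
    proof -
      have D: "0 \<le> real (n+1) powr \<bar>p\<bar> * real (k+1) powr p" by simp
      have "1 * (real (n+1) powr \<bar>p\<bar> * real (k+1) powr p) \<le> 2 powr \<bar>p\<bar> * (real (n+1) powr \<bar>p\<bar> * real (k+1) powr p)"
        using B D by (rule mult_right_mono)
      then show ?thesis by simp
    qed
    finally show ?thesis by (simp add: mult.assoc)
  next
    case False
    have "real (n + k) powr p \<le> (real (k+1) / 2) powr p"
      using False assms by (intro powr_mono2') auto
    also have "\<dots> = real (k+1) powr p / 2 powr p"
      by (rule powr_divide)
    also have "\<dots> = 2 powr \<bar>p\<bar> * real (k + 1) powr p"
      using False by (simp add: powr_minus divide_inverse)
    also have "\<dots> \<le> real (n+1) powr \<bar>p\<bar> * (2 powr \<bar>p\<bar> * real (k + 1) powr p)"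
    proof -
      have D: "0 \<le> 2 powr \<bar>p\<bar> * real (k + 1) powr p" by simp
      have "1 * (2 powr \<bar>p\<bar> * real (k + 1) powr p) \<le> real (n+1) powr \<bar>p\<bar> * (2 powr \<bar>p\<bar> * real (k + 1) powr p)"
        using A D by (rule mult_right_mono)
      then show ?thesis by simp
    qed
    finally show ?thesis by (simp add: ac_simps)
  qed
qed

lemma amgm:
  fixes x y t :: real
  assumes "t > 0"
  shows "x * y \<le> (t * x^2 + y^2 / t) / 2"
proof -
  have "0 \<le> (t*x - y)^2 / t" using assms by simp
  also have "\<dots> = t * x^2 - 2*x*y + y^2/t" using assms by (simp add: field_simps power2_eq_square)
  finally show ?thesis by simp
qed

theorem lemma2p1:
  fixes \<alpha> \<gamma> \<epsilon> :: real and M :: "real measure"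
  assumes "\<gamma> > 0"
    and "borel_measure_on_01 M"
    and "\<epsilon> > 0"
    and "moment M \<in> O(\<lambda>n. real n powr (-(\<alpha> / 2 + \<epsilon>)))"
  shows "\<forall>a. in_Dirichlet_type \<alpha> a \<longrightarrow>
           (\<forall>n. summable (\<lambda>k. complex_of_real (moment M (n + k)) * a k))"
proof (intro allI impI)
  fix a n
  assume a: "in_Dirichlet_type \<alpha> a"
  define m where "m = moment M"
  define p where "p = -\<alpha> - 2*\<epsilon>"
  define K where "K = 2 powr \<bar>p\<bar> * real (n + 1) powr \<bar>p\<bar>"
  from assms(4) obtain C where C: "C > 0"
    "eventually (\<lambda>j. norm (m j) \<le> C * norm (real j powr (-(\<alpha> / 2 + \<epsilon>)))) sequentially"
    unfolding m_def by (elim landau_o.bigE)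
  then obtain N where N: "\<And>j. j \<ge> N \<Longrightarrow> \<bar>m j\<bar> \<le> C * real j powr (-(\<alpha> / 2 + \<epsilon>))"
    by (auto simp: eventually_at_top_linorder)
  have sq: "(m (n+k))^2 \<le> C^2 * K * real (k+1) powr p" if "k \<ge> max N 1" for k
  proof -
    have "\<bar>m (n+k)\<bar> \<le> C * real (n+k) powr (-(\<alpha> / 2 + \<epsilon>))" using N[of "n+k"] that by auto
    hence "\<bar>m (n+k)\<bar>^2 \<le> (C * real (n+k) powr (-(\<alpha> / 2 + \<epsilon>)))^2"
      by (intro power_mono) auto
    also have "\<dots> = C^2 * real (n+k) powr p"
    proof -
      have "n + k > 0" using that by auto
      hence "(real (n+k) powr (-(\<alpha> / 2 + \<epsilon>)))^2 = real (n+k) powr (of_nat 2 * (-(\<alpha> / 2 + \<epsilon>)))"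
        by (intro powr_power) auto
      also have "\<dots> = real (n+k) powr p"
        by (intro arg_cong[of _ _ "\<lambda>e. real (n+k) powr e"]) (simp add: p_def)
      finally show ?thesis by (simp add: power_mult_distrib)
    qed
    also have "\<dots> \<le> C^2 * (K * real (k+1) powr p)"
      unfolding K_def using shift_bound[of k n p] that by (intro mult_left_mono) auto
    finally show ?thesis by simp
  qed
  have s1: "summable (\<lambda>k. (real k + 1) powr (1 - \<alpha>) * (norm (a k))\<^sup>2)"
    using a by (simp add: in_Dirichlet_type_def)
  have s2: "summable (\<lambda>k. C^2 * K * real (k+1) powr (-1 - 2*\<epsilon>))"
  proof -
    have "summable (\<lambda>k. real k powr (-1 - 2*\<epsilon>))"
      using assms(3) by (simp add: summable_real_powr_iff)
    hence "summable (\<lambda>k. real (Suc k) powr (-1 - 2*\<epsilon>))"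
      by (subst summable_Suc_iff)
    thus ?thesis by (intro summable_mult) simp
  qed
  have "summable (\<lambda>k. ((real k + 1) powr (1 - \<alpha>) * (norm (a k))\<^sup>2
          + C^2 * K * real (k+1) powr (-1 - 2*\<epsilon>)) / 2)"
    by (intro summable_divide summable_add s1 s2)
  moreover have "eventually (\<lambda>k. norm (complex_of_real (m (n + k)) * a k) \<le>
       ((real k + 1) powr (1 - \<alpha>) * (norm (a k))\<^sup>2
          + C^2 * K * real (k+1) powr (-1 - 2*\<epsilon>)) / 2) sequentially"
    unfolding eventually_at_top_linorder
  proof (intro exI[of _ "max N 1"] allI impI)
    fix k assume k: "k \<ge> max N 1"
    define t where "t = (real k + 1) powr (1 - \<alpha>)"
    have t: "t > 0" unfolding t_def by simp
    have "norm (complex_of_real (m (n + k)) * a k) = norm (a k) * \<bar>m (n+k)\<bar>"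
      by (simp add: norm_mult)
    also have "\<dots> \<le> (t * (norm (a k))^2 + \<bar>m (n+k)\<bar>^2 / t) / 2"
      by (rule amgm[OF t])
    also have "\<bar>m (n+k)\<bar>^2 / t \<le> C^2 * K * real (k+1) powr p / t"
      using sq[OF k] t by (intro divide_right_mono) auto
    also have "C^2 * K * real (k+1) powr p / t = C^2 * K * real (k+1) powr (-1 - 2*\<epsilon>)"
    proof -
      have "real (k+1) powr p / t = real (k+1) powr (p - (1 - \<alpha>))"
        unfolding t_def by (simp add: powr_diff add.commute)
      also have "\<dots> = real (k+1) powr (-1 - 2*\<epsilon>)"
        by (intro arg_cong[of _ _ "\<lambda>e. real (k+1) powr e"]) (simp add: p_def)
      finally show ?thesis by (metis times_divide_eq_right)
    qed
    finally show "norm (complex_of_real (m (n + k)) * a k) \<le>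
       ((real k + 1) powr (1 - \<alpha>) * (norm (a k))\<^sup>2
          + C^2 * K * real (k+1) powr (-1 - 2*\<epsilon>)) / 2"
      unfolding t_def by simp
  qed
  ultimately have "summable (\<lambda>k. complex_of_real (m (n + k)) * a k)"
    by (rule summable_comparison_test_ev[rotated])
  then show "summable (\<lambda>k. complex_of_real (moment M (n + k)) * a k)"
    by (simp add: m_def)
qed

end
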